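(* Let $\mathcal{G}_n$ be the random graph described in the context. For $\delta_n>0$, a configuration $\sigma:\mathcal{V}_n\to\{-1,1\}$, $k,l\in\{1,2\}$, $t\in\{-,+\}$ and $u\in\mathcal{V}_n^k$, let $$B_t^{k,l}(\sigma,u)=\Big\{\big|\hat Y_t^l(\sigma,u)-p_n(k,l)Y_t^l(\sigma)\big|\ge\sqrt{p_n(k,l)Y_t^l(\sigma)\delta_n}\Big\}.$$ Suppose $\gamma_n>0$, $\delta_n>0$ and $\xi_n\in(0,1)$ satisfy $$\lim_{n\to\infty}\delta_n=\infty,\qquad\lim_{n\to\infty}\frac{\delta_n}{\xi_n\lambda_n}=0,\qquad\lim_{n\to\infty}\frac{\delta_n}{\gamma_n}=\infty.$$ Fix $\zeta>0$ and $k,l\in\{1,2\}$, $s,t\in\{-,+\}$ with $(k,s)\neq(l,t)$. Then $$\max_{\sigma\in\Sigma_n(\zeta,\xi_n)}\frac{\gamma_n}{n}\sum_{u\in\mathcal{Y}_s^k(\sigma)}\mathbf{1}\{B_t^{k,l}(\sigma,u)\}\Rightarrow0\quad\text{as }n\to\infty.$$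
   Context: For each $n$, the node set $\mathcal{V}_n=\mathcal{V}_n^1\cup\mathcal{V}_n^2$ is a disjoint union of two communities of sizes $V_n^k=|\mathcal{V}_n^k|$ with $V_n^k/n\to v^k\in(0,\infty)$. The graph $\mathcal{G}_n$ is a stochastic block model: each unordered pair of distinct nodes is an edge independently with probability $p_n(k,l)$ for nodes in $\mathcal{V}_n^k$ and $\mathcal{V}_n^l$, where $p_n(k,k)=a_n=a\lambda_n/n$ and $p_n(k,l)=b_n=b\lambda_n/n$ for $k\ne l$, with constants $a>b>0$ and $\lambda_n\to\infty$. For a configuration $\sigma:\mathcal{V}_n\to\{-1,1\}$ and $s\in\{-,+\}$, $\mathcal{Y}_s^k(\sigma)=\{v\in\mathcal{V}_n^k:\sigma(v)=s1\}$, $Y_s^k(\sigma)=|\mathcal{Y}_s^k(\sigma)|$, and $\hat Y_s^k(\sigma,u)$ is the number of neighbors of $u$ in $\mathcal{Y}_s^k(\sigma)$. Magnetization: $z^k(\sigma)=\frac1{V_n^k}\sum_{u\in\mathcal{V}_n^k}\sigma(u)$, $z(\sigma)=(z^1(\sigma),z^2(\sigma))$. For a constant $\alpha\in\mathbb{R}$ and $\bar k=3-k$, let $\mathcal{L}^k(z)=(a-\alpha)v^kz^k+(b-\alpha)v^{\bar k}z^{\bar k}$ for $z\in\mathbb{R}^2$. For $\zeta>0$, $\xi\in(0,1)$: $\mathcal{A}(\zeta,\xi)=\{z\in[-1+\xi,1-\xi]^2:\min\{\mathcal{L}^1(z),-\mathcal{L}^2(z)\}\ge\zeta\}$ and $\Sigma_n(\zeta,\xi)=\{\sigma:\mathcal{V}_n\to\{-1,1\}\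 :\ z(\sigma)\in\mathcal{A}(\zeta,\xi)\}$. $\Rightarrow$ denotes weak convergence (here to the constant $0$). *)

theory Defs
  imports "HOL-Probability.Probability"
begin

definition community :: "nat \<Rightarrow> nat \<Rightarrow> nat \<Rightarrow> nat set" where
  "community V1 V2 k = (if k = 1 then {0..<V1} else if k = 2 then {V1..<V1+V2} else {})"

definition comm :: "nat \<Rightarrow> nat \<Rightarrow> nat" where
  "comm V1 v = (if v < V1 then 1 else 2)"

definition sbm_p :: "real \<Rightarrow> real \<Rightarrow> real \<Rightarrow> nat \<Rightarrow> nat \<Rightarrow> nat \<Rightarrow> real" where
  "sbm_p a b lam n k l = (if k = l then a * lam / real n else b * lam / real n)"

(* unordered pairs of distinct nodes, represented as (i,j) with i<j *)
definition node_pairs :: "nat \<Rightarrow> (nat \<times> nat) set" where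
  "node_pairs N = {(i,j). i < j \<and> j < N}"

definition sbm :: "real \<Rightarrow> real \<Rightarrow> real \<Rightarrow> nat \<Rightarrow> nat \<Rightarrow> nat \<Rightarrow> (nat \<times> nat \<Rightarrow> bool) pmf" where
  "sbm a b lam n V1 V2 = Pi_pmf (node_pairs (V1 + V2)) False
     (\<lambda>(i,j). bernoulli_pmf (sbm_p a b lam n (comm V1 i) (comm V1 j)))"

definition adj :: "(nat \<times> nat \<Rightarrow> bool) \<Rightarrow> nat \<Rightarrow> nat \<Rightarrow> bool" where
  "adj G u w = (if u < w then G (u,w) else if w < u then G (w,u) else False)"

definition configs :: "nat \<Rightarrow> (nat \<Rightarrow> int) set" where
  "configs N = {\<sigma>. (\<forall>v<N. \<sigma> v \<in> {-1, 1}) \<and> (\<forall>v\<ge>N. \<sigma> v = 1)}"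

definition Yset :: "nat \<Rightarrow> nat \<Rightarrow> (nat \<Rightarrow> int) \<Rightarrow> int \<Rightarrow> nat \<Rightarrow> nat set" where
  "Yset V1 V2 \<sigma> s k = {v \<in> community V1 V2 k. \<sigma> v = s}"

definition Yhat :: "(nat \<times> nat \<Rightarrow> bool) \<Rightarrow> nat \<Rightarrow> nat \<Rightarrow> (nat \<Rightarrow> int) \<Rightarrow> int \<Rightarrow> nat \<Rightarrow> nat \<Rightarrow> nat" where
  "Yhat G V1 V2 \<sigma> s k u = card {v \<in> Yset V1 V2 \<sigma> s k. adj G u v}"

definition magn :: "nat \<Rightarrow> nat \<Rightarrow> (nat \<Rightarrow> int) \<Rightarrow> nat \<Rightarrow> real" where
  "magn V1 V2 \<sigma> k = (\<Sum>u\<in>community V1 V2 k. real_of_int (\<sigma> u)) / real (card (community V1 V2 k))"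

(* L^k(z) with v, z indexed by 1,2 *)
definition sbmL :: "real \<Rightarrow> real \<Rightarrow> real \<Rightarrow> (nat \<Rightarrow> real) \<Rightarrow> (nat \<Rightarrow> real) \<Rightarrow> nat \<Rightarrow> real" where
  "sbmL a b \<alpha> v z k = (a - \<alpha>) * v k * z k + (b - \<alpha>) * v (3 - k) * z (3 - k)"

definition inA :: "real \<Rightarrow> real \<Rightarrow> real \<Rightarrow> (nat \<Rightarrow> real) \<Rightarrow> real \<Rightarrow> real \<Rightarrow> (nat \<Rightarrow> real) \<Rightarrow> bool" where
  "inA a b \<alpha> v \<zeta> \<xi> z \<longleftrightarrow>
     (\<forall>k\<in>{1,2}. -1 + \<xi> \<le> z k \<and> z k \<le> 1 - \<xi>) \<and>
     min (sbmL a b \<alpha> v z 1) (- sbmL a b \<alpha> v z 2) \<ge> \<zeta>"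

definition SigmaA :: "real \<Rightarrow> real \<Rightarrow> real \<Rightarrow> (nat \<Rightarrow> real) \<Rightarrow> real \<Rightarrow> real \<Rightarrow> nat \<Rightarrow> nat \<Rightarrow> (nat \<Rightarrow> int) set" where
  "SigmaA a b \<alpha> v \<zeta> \<xi> V1 V2 =
     {\<sigma> \<in> configs (V1 + V2). inA a b \<alpha> v \<zeta> \<xi> (\<lambda>k. magn V1 V2 \<sigma> k)}"

definition Bevent :: "real \<Rightarrow> real \<Rightarrow> real \<Rightarrow> nat \<Rightarrow> nat \<Rightarrow> nat \<Rightarrow> real \<Rightarrow> (nat \<times> nat \<Rightarrow> bool)
    \<Rightarrow> (nat \<Rightarrow> int) \<Rightarrow> nat \<Rightarrow> nat \<Rightarrow> int \<Rightarrow> nat \<Rightarrow> bool" where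
  "Bevent a b lam n V1 V2 \<delta> G \<sigma> k l t u \<longleftrightarrow>
     \<bar>real (Yhat G V1 V2 \<sigma> t l u) - sbm_p a b lam n k l * real (card (Yset V1 V2 \<sigma> t l))\<bar>
       \<ge> sqrt (sbm_p a b lam n k l * real (card (Yset V1 V2 \<sigma> t l)) * \<delta>)"

(* max over Sigma_n(zeta,xi_n) of (gamma_n/n) * sum_{u in Y_s^k} 1{B}; max of empty set read as 0 *)
definition maxstat :: "real \<Rightarrow> real \<Rightarrow> real \<Rightarrow> (nat \<Rightarrow> real) \<Rightarrow> real \<Rightarrow> real \<Rightarrow> real \<Rightarrow> real \<Rightarrow> real
    \<Rightarrow> nat \<Rightarrow> nat \<Rightarrow> nat \<Rightarrow> nat \<Rightarrow> nat \<Rightarrow> int \<Rightarrow> int \<Rightarrow> (nat \<times> nat \<Rightarrow> bool) \<Rightarrow> real" where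
  "maxstat a b \<alpha> v \<zeta> \<xi> lam \<gamma> \<delta> n V1 V2 k l s t G =
     Max (insert 0 ((\<lambda>\<sigma>. \<gamma> / real n *
        real (card {u \<in> Yset V1 V2 \<sigma> s k. Bevent a b lam n V1 V2 \<delta> G \<sigma> k l t u}))
       ` SigmaA a b \<alpha> v \<zeta> \<xi> V1 V2))"

end

theory Submission
  imports Defs
begin


lemma exp_le_quad:
  fixes y :: real assumes "\<bar>y\<bar> \<le> 1" shows "exp y \<le> 1 + y + y\<^sup>2"
proof (cases "y \<ge> 0")
  case True then show ?thesis using exp_bound assms by auto
next
  case False
  define z where "z = - y"
  have z: "0 \<le> z" "z \<le> 1" using False assms z_def by auto
  have "1 - z + z\<^sup>2 = (z - 1/2)\<^sup>2 + 3/4" by (simp add: power2_eq_square algebra_simps)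
  moreover have "0 \<le> (z - 1/2)\<^sup>2" by simp
  ultimately have pos: "0 < 1 - z + z\<^sup>2" by linarith
  have "1 \<le> (1 + z) * (1 - z + z\<^sup>2)" using z by (simp add: algebra_simps power2_eq_square power3_eq_cube)
  also have "\<dots> \<le> exp z * (1 - z + z\<^sup>2)" using pos exp_ge_add_one_self[of z] by (intro mult_right_mono) auto
  finally have "1 \<le> exp z * (1 - z + z\<^sup>2)" .
  then have "exp (-z) \<le> 1 - z + z\<^sup>2" by (simp add: exp_minus field_simps)
  then show ?thesis by (simp add: z_def)
qed

lemma bern_mgf:
  fixes r y :: real
  assumes r: "0 \<le> r" "r \<le> 1" and y: "\<bar>y\<bar> \<le> 1"
  shows "measure_pmf.expectation (bernoulli_pmf r) (\<lambda>x. exp (y * (of_bool x - r))) \<le> exp (r * y\<^sup>2)"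
proof -
  have e1: "exp (y * (1 - r)) = exp (- (y * r)) * exp y"
  proof -
    have "exp (y * (1 - r)) = exp (- (y * r) + y)" by (simp add: algebra_simps)
    then show ?thesis by (simp only: exp_add)
  qed
  have "measure_pmf.expectation (bernoulli_pmf r) (\<lambda>x. exp (y * (of_bool x - r)))
      = exp (y * (1 - r)) * r + exp (y * (0 - r)) * (1 - r)" using r by simp
  also have "\<dots> = exp (- (y * r)) * (r * exp y + (1 - r))"
    unfolding e1 by (simp add: algebra_simps)
  also have "\<dots> \<le> exp (- (y * r)) * (1 + r * (y + y\<^sup>2))"
  proof -
    have "r * exp y \<le> r * (1 + y + y\<^sup>2)" using exp_le_quad[OF y] r by (intro mult_left_mono) auto
    then show ?thesis by (intro mult_left_mono) (auto simp: algebra_simps)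
  qed
  also have "\<dots> \<le> exp (- (y * r)) * exp (r * (y + y\<^sup>2))"
    by (intro mult_left_mono exp_ge_add_one_self) auto
  also have "\<dots> = exp (- (y * r) + r * (y + y\<^sup>2))" by (simp only: exp_add)
  also have "- (y * r) + r * (y + y\<^sup>2) = r * y\<^sup>2" by (simp add: algebra_simps)
  finally show ?thesis .
qed



definition edg :: "nat \<Rightarrow> nat \<Rightarrow> nat \<times> nat" where "edg u v = (min u v, max u v)"

lemma adj_edg: "u \<noteq> v \<Longrightarrow> adj G u v = G (edg u v)"
  by (auto simp: adj_def edg_def)

lemma edg_inj:
  assumes "edg u v = edg u' v'" "u \<in> S" "u' \<in> S" "v \<in> W" "v' \<in> W" "S \<inter> W = {}"
  shows "u = u' \<and> v = v'"
  using assms unfolding edg_def by (auto simp: min_def max_def split: if_splits)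

lemma finite_node_pairs: "finite (node_pairs N)"
  by (rule finite_subset[of _ "{..<N} \<times> {..<N}"]) (auto simp: node_pairs_def)

lemma finite_set_sbm: "finite (set_pmf (sbm a b lam n V1 V2))"
proof -
  have "set_pmf (sbm a b lam n V1 V2) \<subseteq> PiE_dflt (node_pairs (V1+V2)) False (\<lambda>_. UNIV)"
    unfolding sbm_def using set_Pi_pmf_subset'[OF finite_node_pairs] by (fastforce simp: PiE_dflt_def)
  moreover have "finite (PiE_dflt (node_pairs (V1+V2)) False (\<lambda>_::nat\<times>nat. UNIV :: bool set))"
    by (intro finite_PiE_dflt finite_node_pairs) auto
  ultimately show ?thesis by (rule finite_subset)
qed

lemma comm_community: "k \<in> {1,2} \<Longrightarrow> u \<in> community V1 V2 k \<Longrightarrow> comm V1 u = k"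
  by (auto simp: comm_def community_def)

lemma sbm_p_sym: "sbm_p a b lam n k l = sbm_p a b lam n l k"
  by (simp add: sbm_p_def)

lemma markov_exp:
  fixes M :: "'a pmf" and X :: "'a \<Rightarrow> real"
  assumes fin: "finite (set_pmf M)" and th: "\<theta> \<ge> 0"
  shows "measure_pmf.prob M {x. X x \<ge> c} \<le> exp (- \<theta> * c) * measure_pmf.expectation M (\<lambda>x. exp (\<theta> * X x))"
proof -
  have "measure_pmf.prob M {x. X x \<ge> c} = measure_pmf.expectation M (indicator {x. X x \<ge> c})"
    by simp
  also have "\<dots> \<le> measure_pmf.expectation M (\<lambda>x. exp (- \<theta> * c) * exp (\<theta> * X x))"
  proof (intro integral_mono integrable_measure_pmf_finite fin)
    fix x
    show "indicator {x. X x \<ge> c} x \<le> exp (- \<theta> * c) * exp (\<theta> * X x)"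
    proof (cases "X x \<ge> c")
      case True
      then have "0 \<le> - \<theta> * c + \<theta> * X x" using th by (simp add: algebra_simps mult_left_mono)
      then have "1 \<le> exp (- \<theta> * c + \<theta> * X x)" by simp
      moreover have "exp (- \<theta> * c) * exp (\<theta> * X x) = exp (- \<theta> * c + \<theta> * X x)" by (simp only: exp_add)
      ultimately show ?thesis using True by (simp add: indicator_def)
    qed auto
  qed
  also have "\<dots> = exp (- \<theta> * c) * measure_pmf.expectation M (\<lambda>x. exp (\<theta> * X x))" by simp
  finally show ?thesis .
qed



lemma mgf_sbm:
  fixes S W :: "nat set" and c :: "nat \<Rightarrow> real" and a b lam \<theta> :: real and n k l V1 V2 :: nat
  defines "p \<equiv> sbm_p a b lam n k l"
  assumes kl: "k \<in> {1,2}" "l \<in> {1,2}"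
    and SW: "S \<subseteq> community V1 V2 k" "W \<subseteq> community V1 V2 l" "S \<inter> W = {}"
    and c: "\<And>u. c u \<in> {-1, 1}" and th: "0 \<le> \<theta>" "\<theta> \<le> 1" and p: "0 \<le> p" "p \<le> 1"
  shows "measure_pmf.expectation (sbm a b lam n V1 V2)
           (\<lambda>G. exp (\<theta> * (\<Sum>uv\<in>S \<times> W. c (fst uv) * (of_bool (adj G (fst uv) (snd uv)) - p))))
         \<le> exp (p * \<theta>\<^sup>2 * real (card S * card W))"
proof -
  define E where "E = node_pairs (V1 + V2)"
  define q where "q = (\<lambda>(i,j). bernoulli_pmf (sbm_p a b lam n (comm V1 i) (comm V1 j)))"
  have sbm_eq: "sbm a b lam n V1 V2 = Pi_pmf E False q" by (simp add: sbm_def E_def q_def)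
  have finE: "finite E" by (simp add: E_def finite_node_pairs)
  have finS: "finite S" "finite W"
    using SW by (auto intro: finite_subset simp: community_def split: if_splits)
  have finSW: "finite (S \<times> W)" using finS by simp
  define g where "g = (\<lambda>(uv::nat\<times>nat) x. exp (\<theta> * (c (fst uv) * (of_bool x - p))))"
  define H where "H = (\<lambda>e. {uv. uv \<in> S \<times> W \<and> edg (fst uv) (snd uv) = e})"
  define f where "f = (\<lambda>e x. \<Prod>uv\<in>H e. g uv x)"
  have neq: "fst uv \<noteq> snd uv" if "uv \<in> S \<times> W" for uv using that SW(3) by auto
  have edgE: "(\<lambda>uv. edg (fst uv) (snd uv)) ` (S \<times> W) \<subseteq> E"
  proof
    fix e assume "e \<in> (\<lambda>uv. edg (fst uv) (snd uv)) ` (S \<times> W)"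
    then obtain u v where uv: "u \<in> S" "v \<in> W" "e = edg u v" by auto
    have "u < V1 + V2" "v < V1 + V2" using uv SW kl by (auto simp: community_def)
    moreover have "u \<noteq> v" using uv SW(3) by auto
    ultimately show "e \<in> E" using uv by (auto simp: E_def node_pairs_def edg_def min_def max_def)
  qed
  have step1: "exp (\<theta> * (\<Sum>uv\<in>S \<times> W. c (fst uv) * (of_bool (adj G (fst uv) (snd uv)) - p)))
      = (\<Prod>e\<in>E. f e (G e))" for G
  proof -
    have "exp (\<theta> * (\<Sum>uv\<in>S \<times> W. c (fst uv) * (of_bool (adj G (fst uv) (snd uv)) - p)))
        = (\<Prod>uv\<in>S \<times> W. g uv (G (edg (fst uv) (snd uv))))"
      by (simp add: sum_distrib_left exp_sum finSW g_def adj_edg neq cong: prod.cong)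
    also have "\<dots> = (\<Prod>e\<in>E. \<Prod>uv\<in>H e. g uv (G (edg (fst uv) (snd uv))))"
      unfolding H_def by (rule prod.group[symmetric, OF finSW finE edgE])
    also have "\<dots> = (\<Prod>e\<in>E. f e (G e))"
      unfolding f_def by (intro prod.cong refl) (auto simp: H_def)
    finally show ?thesis .
  qed
  have finH: "finite (H e)" for e using finSW by (auto simp: H_def)
  have Hcard: "card (H e) \<le> 1" for e
  proof -
    have "card (H e) \<le> Suc 0" using finH[of e]
      by (subst card_le_Suc0_iff_eq) (auto simp: H_def dest: edg_inj[OF _ _ _ _ _ SW(3)])
    then show ?thesis by simp
  qed
  have bound: "measure_pmf.expectation (q e) (f e) \<le> exp (p * \<theta>\<^sup>2 * real (card (H e)))" if "e \<in> E" for e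
  proof (cases "H e = {}")
    case True then show ?thesis by (simp add: f_def)
  next
    case False
    have "card (H e) \<noteq> 0" using False finH[of e] by simp
    then have "card (H e) = 1" using Hcard[of e] by linarith
    then obtain h where h: "H e = {h}" by (rule card_1_singletonE)
    obtain u v where uv: "h = (u, v)" by fastforce
    have "(u, v) \<in> H e" using h uv by simp
    then have uvS: "u \<in> S" "v \<in> W" "edg u v = e" by (auto simp: H_def)
    have cu: "comm V1 u = k" "comm V1 v = l" using uvS SW kl comm_community by auto
    have qe: "q e = bernoulli_pmf p"
      using uvS cu unfolding q_def p_def edg_def
      by (cases "u \<le> v") (auto simp: min_def max_def sbm_p_sym)
    have fe: "f e = g h" by (simp add: f_def h)
    have y: "\<bar>\<theta> * c u\<bar> \<le> 1" using c[of u] th by auto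
    have "measure_pmf.expectation (q e) (f e) = measure_pmf.expectation (bernoulli_pmf p) (\<lambda>x. exp ((\<theta> * c u) * (of_bool x - p)))"
      by (simp add: qe fe g_def uv mult.assoc)
    also have "\<dots> \<le> exp (p * (\<theta> * c u)\<^sup>2)" by (rule bern_mgf[OF p y])
    also have "(\<theta> * c u)\<^sup>2 = \<theta>\<^sup>2" using c[of u] by (auto simp: power_mult_distrib)
    finally show ?thesis by (simp add: h)
  qed
  have "measure_pmf.expectation (sbm a b lam n V1 V2)
           (\<lambda>G. exp (\<theta> * (\<Sum>uv\<in>S \<times> W. c (fst uv) * (of_bool (adj G (fst uv) (snd uv)) - p))))
      = measure_pmf.expectation (Pi_pmf E False q) (\<lambda>G. \<Prod>e\<in>E. f e (G e))"
    by (simp only: step1 sbm_eq)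
  also have "\<dots> = (\<Prod>e\<in>E. measure_pmf.expectation (q e) (f e))"
    by (rule expectation_prod_Pi_pmf[OF finE])
       (auto simp: f_def g_def intro!: integrable_measure_pmf_finite prod_nonneg)
  also have "\<dots> \<le> (\<Prod>e\<in>E. exp (p * \<theta>\<^sup>2 * real (card (H e))))"
    by (intro prod_mono conjI bound) (auto simp: f_def g_def intro!: integral_nonneg_AE prod_nonneg)
  also have "\<dots> = exp (p * \<theta>\<^sup>2 * real (\<Sum>e\<in>E. card (H e)))"
    by (simp add: exp_sum[OF finE, symmetric] sum_distrib_left)
  also have "(\<Sum>e\<in>E. card (H e)) = card (S \<times> W)"
  proof -
    have "(\<Sum>e\<in>E. card (H e)) = (\<Sum>e\<in>E. \<Sum>uv\<in>H e. 1)" by simp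
    also have "\<dots> = (\<Sum>uv\<in>S \<times> W. (1::nat))"
      unfolding H_def by (rule sum.group[OF finSW finE edgE])
    finally show ?thesis by simp
  qed
  finally show ?thesis by (simp add: card_cartesian_product)
qed



lemma tail_sbm:
  fixes S W :: "nat set" and c :: "nat \<Rightarrow> real" and a b lam \<delta> \<mu> :: real and n k l V1 V2 :: nat
  defines "p \<equiv> sbm_p a b lam n k l"
  assumes kl: "k \<in> {1,2}" "l \<in> {1,2}"
    and SW: "S \<subseteq> community V1 V2 k" "W \<subseteq> community V1 V2 l" "S \<inter> W = {}"
    and c: "\<And>u. c u \<in> {-1, 1}" and p: "0 \<le> p" "p \<le> 1"
    and mu: "\<mu> = p * real (card W)" and d: "0 < \<delta>" "4 * \<delta> \<le> \<mu>"
  shows "measure_pmf.prob (sbm a b lam n V1 V2)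
     {G. (\<Sum>u\<in>S. c u * (real (card {v \<in> W. adj G u v}) - \<mu>)) \<ge> real (card S) * sqrt (\<mu> * \<delta>)}
     \<le> exp (- (real (card S) * \<delta> / 4))"
proof -
  have finS: "finite S" "finite W"
    using SW kl by (auto intro: finite_subset simp: community_def split: if_splits)
  have mupos: "\<mu> > 0" using d by linarith
  define \<theta> where "\<theta> = sqrt (\<delta> / \<mu>) / 2"
  have "\<delta> / \<mu> \<le> 1" using d mupos by (simp add: divide_le_eq)
  then have sq1: "sqrt (\<delta> / \<mu>) \<le> 1" by simp
  have sq0: "0 \<le> sqrt (\<delta> / \<mu>)" using d mupos by simp
  have th: "0 \<le> \<theta>" "\<theta> \<le> 1" unfolding \<theta>_def using sq0 sq1 by linarith+
  have eq: "(\<Sum>u\<in>S. c u * (real (card {v \<in> W. adj G u v}) - \<mu>))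
      = (\<Sum>uv\<in>S \<times> W. c (fst uv) * (of_bool (adj G (fst uv) (snd uv)) - p))" for G
  proof -
    have "real (card {v \<in> W. adj G u v}) - \<mu> = (\<Sum>v\<in>W. (of_bool (adj G u v) - p))" for u
      using finS by (simp add: mu sum_subtractf of_bool_def sum.If_cases Int_def conj_commute)
    then show ?thesis
      by (simp add: sum.cartesian_product sum_distrib_left case_prod_beta)
  qed
  define X where "X = (\<lambda>G. \<Sum>uv\<in>S \<times> W. c (fst uv) * (of_bool (adj G (fst uv) (snd uv)) - p))"
  have "measure_pmf.prob (sbm a b lam n V1 V2)
     {G. (\<Sum>u\<in>S. c u * (real (card {v \<in> W. adj G u v}) - \<mu>)) \<ge> real (card S) * sqrt (\<mu> * \<delta>)}
     = measure_pmf.prob (sbm a b lam n V1 V2) {G. X G \<ge> real (card S) * sqrt (\<mu> * \<delta>)}"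
    by (simp add: eq X_def)
  also have "\<dots> \<le> exp (- \<theta> * (real (card S) * sqrt (\<mu> * \<delta>))) *
       measure_pmf.expectation (sbm a b lam n V1 V2) (\<lambda>G. exp (\<theta> * X G))"
    by (rule markov_exp[OF finite_set_sbm th(1)])
  also have "\<dots> \<le> exp (- \<theta> * (real (card S) * sqrt (\<mu> * \<delta>))) * exp (p * \<theta>\<^sup>2 * real (card S * card W))"
    unfolding X_def p_def
    by (intro mult_left_mono mgf_sbm[OF kl SW c th]) (use p in \<open>auto simp: p_def\<close>)
  also have "\<dots> = exp (- \<theta> * (real (card S) * sqrt (\<mu> * \<delta>)) + p * \<theta>\<^sup>2 * real (card S * card W))"
    by (simp only: exp_add)
  also have "- \<theta> * (real (card S) * sqrt (\<mu> * \<delta>)) + p * \<theta>\<^sup>2 * real (card S * card W)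
      = - (real (card S) * \<delta> / 4)"
  proof -
    have s1: "sqrt (\<delta> / \<mu>) * sqrt (\<mu> * \<delta>) = \<delta>"
      using mupos d by (simp add: real_sqrt_mult[symmetric] field_simps)
    have s2: "\<theta>\<^sup>2 = \<delta> / \<mu> / 4" using mupos d by (simp add: \<theta>_def power_divide)
    have "p * \<theta>\<^sup>2 * real (card S * card W) = real (card S) * \<delta> / 4"
    proof -
      have "p \<noteq> 0" "card W \<noteq> 0" using mupos mu by (auto intro: ccontr)
      then show ?thesis by (simp add: s2 mu field_simps)
    qed
    moreover have "\<theta> * (real (card S) * sqrt (\<mu> * \<delta>)) = real (card S) * \<delta> / 2"
      using s1 by (simp add: \<theta>_def field_simps)
    ultimately show ?thesis by linarith
  qed
  finally show ?thesis .
qed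



lemma count_tail:
  fixes U W :: "nat set" and a b lam \<delta> \<mu> :: real and n k l V1 V2 m :: nat
  defines "p \<equiv> sbm_p a b lam n k l"
  assumes kl: "k \<in> {1,2}" "l \<in> {1,2}"
    and UW: "U \<subseteq> community V1 V2 k" "W \<subseteq> community V1 V2 l" "U \<inter> W = {}"
    and p: "0 \<le> p" "p \<le> 1"
    and mu: "\<mu> = p * real (card W)" and d: "0 < \<delta>" "4 * \<delta> \<le> \<mu>"
  shows "measure_pmf.prob (sbm a b lam n V1 V2)
     {G. m \<le> card {u \<in> U. \<bar>real (card {v \<in> W. adj G u v}) - \<mu>\<bar> \<ge> sqrt (\<mu> * \<delta>)}}
     \<le> 4 ^ card U * exp (- (real m * \<delta> / 4))"
proof -
  have finU: "finite U"
    using UW kl by (auto intro: finite_subset simp: community_def split: if_splits)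
  define J where "J = {(S, T). S \<subseteq> U \<and> card S = m \<and> T \<subseteq> S}"
  define cc where "cc = (\<lambda>T (u::nat). if u \<in> T then (1::real) else -1)"
  define A where "A = (\<lambda>(S, T). {G. (\<Sum>u\<in>S. cc T u * (real (card {v \<in> W. adj G u v}) - \<mu>))
                                    \<ge> real (card S) * sqrt (\<mu> * \<delta>)})"
  have JP: "J \<subseteq> Pow U \<times> Pow U" by (auto simp: J_def)
  have finJ: "finite J" using finU by (intro finite_subset[OF JP]) simp
  have cardJ: "card J \<le> 4 ^ card U"
  proof -
    have "card J \<le> card (Pow U \<times> Pow U)" using JP finU by (intro card_mono) auto
    also have "\<dots> = 4 ^ card U" using finU
      by (simp add: card_cartesian_product card_Pow power_mult_distrib[symmetric])
    finally show ?thesis .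
  qed
  have sub: "{G. m \<le> card {u \<in> U. \<bar>real (card {v \<in> W. adj G u v}) - \<mu>\<bar> \<ge> sqrt (\<mu> * \<delta>)}}
      \<subseteq> (\<Union>i\<in>J. A i)"
  proof
    fix G assume "G \<in> {G. m \<le> card {u \<in> U. \<bar>real (card {v \<in> W. adj G u v}) - \<mu>\<bar> \<ge> sqrt (\<mu> * \<delta>)}}"
    then have "m \<le> card {u \<in> U. \<bar>real (card {v \<in> W. adj G u v}) - \<mu>\<bar> \<ge> sqrt (\<mu> * \<delta>)}" by simp
    then obtain S where S: "S \<subseteq> {u \<in> U. \<bar>real (card {v \<in> W. adj G u v}) - \<mu>\<bar> \<ge> sqrt (\<mu> * \<delta>)}"
      "card S = m" "finite S" by (rule obtain_subset_with_card_n)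
    define T where "T = {u \<in> S. real (card {v \<in> W. adj G u v}) \<ge> \<mu>}"
    have "(S, T) \<in> J" using S by (auto simp: J_def T_def)
    moreover have "G \<in> A (S, T)"
    proof -
      have "(\<Sum>u\<in>S. sqrt (\<mu> * \<delta>)) \<le> (\<Sum>u\<in>S. cc T u * (real (card {v \<in> W. adj G u v}) - \<mu>))"
      proof (intro sum_mono)
        fix u assume "u \<in> S"
        then have "\<bar>real (card {v \<in> W. adj G u v}) - \<mu>\<bar> \<ge> sqrt (\<mu> * \<delta>)" using S by auto
        then show "sqrt (\<mu> * \<delta>) \<le> cc T u * (real (card {v \<in> W. adj G u v}) - \<mu>)"
          using \<open>u \<in> S\<close> by (auto simp: cc_def T_def abs_if split: if_splits)
      qed
      then show ?thesis by (simp add: A_def)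
    qed
    ultimately show "G \<in> (\<Union>i\<in>J. A i)" by blast
  qed
  have "measure_pmf.prob (sbm a b lam n V1 V2)
     {G. m \<le> card {u \<in> U. \<bar>real (card {v \<in> W. adj G u v}) - \<mu>\<bar> \<ge> sqrt (\<mu> * \<delta>)}}
     \<le> measure_pmf.prob (sbm a b lam n V1 V2) (\<Union>i\<in>J. A i)"
    by (rule measure_pmf.finite_measure_mono[OF sub]) simp
  also have "\<dots> \<le> (\<Sum>i\<in>J. measure_pmf.prob (sbm a b lam n V1 V2) (A i))"
    by (rule measure_UNION_le[OF finJ]) simp
  also have "\<dots> \<le> (\<Sum>i\<in>J. exp (- (real m * \<delta> / 4)))"
  proof (intro sum_mono)
    fix i assume "i \<in> J"
    then obtain S T where i: "i = (S, T)" "S \<subseteq> U" "card S = m" "T \<subseteq> S" by (auto simp: J_def)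
    have "measure_pmf.prob (sbm a b lam n V1 V2) (A i) \<le> exp (- (real (card S) * \<delta> / 4))"
      unfolding i(1) A_def prod.case
      by (rule tail_sbm[OF kl _ UW(2) _ _ p[unfolded p_def] mu[unfolded p_def] d])
         (use i UW in \<open>auto simp: cc_def\<close>)
    then show "measure_pmf.prob (sbm a b lam n V1 V2) (A i) \<le> exp (- (real m * \<delta> / 4))"
      using i by simp
  qed
  also have "\<dots> = real (card J) * exp (- (real m * \<delta> / 4))" by simp
  also have "\<dots> \<le> 4 ^ card U * exp (- (real m * \<delta> / 4))"
    using cardJ by (intro mult_right_mono) (auto simp flip: of_nat_power)
  finally show ?thesis .
qed



lemma configs_card: "finite (configs N) \<and> card (configs N) \<le> 2 ^ N"
proof -
  define h where "h = (\<lambda>\<sigma>::nat\<Rightarrow>int. {v \<in> {..<N}. \<sigma> v = 1})"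
  have inj: "inj_on h (configs N)"
  proof (rule inj_onI)
    fix \<sigma> \<sigma>' assume a: "\<sigma> \<in> configs N" "\<sigma>' \<in> configs N" "h \<sigma> = h \<sigma>'"
    show "\<sigma> = \<sigma>'"
    proof
      fix v show "\<sigma> v = \<sigma>' v"
      proof (cases "v < N")
        case True
        then have "\<sigma> v = 1 \<longleftrightarrow> \<sigma>' v = 1" using a(3) unfolding h_def by (auto simp: set_eq_iff)
        moreover have "\<sigma> v \<in> {-1,1}" "\<sigma>' v \<in> {-1,1}" using a True by (auto simp: configs_def)
        ultimately show ?thesis by auto
      next
        case False then show ?thesis using a by (auto simp: configs_def)
      qed
    qed
  qed
  have img: "h ` configs N \<subseteq> Pow {..<N}" by (auto simp: h_def)
  have fin: "finite (configs N)" using inj img by (rule inj_on_finite) simp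
  have "card (configs N) \<le> card (Pow {..<N::nat})" using inj img by (intro card_inj_on_le) auto
  then show ?thesis using fin by (simp add: card_Pow)
qed

lemma prob_bound_n:
  fixes a b \<alpha> \<zeta> \<xi> lam \<gamma> \<delta> \<epsilon> :: real and v :: "nat \<Rightarrow> real" and n V1 V2 k l :: nat and s t :: int
  defines "p \<equiv> sbm_p a b lam n k l"
  assumes kl: "k \<in> {1,2}" "l \<in> {1,2}" and st: "s \<in> {-1,1}" "t \<in> {-1,1}" and ne: "(k, s) \<noteq> (l, t)"
    and p: "0 \<le> p" "p \<le> 1" and pos: "0 < \<delta>" "0 < \<gamma>" "0 < \<epsilon>" "0 < n"
    and H: "\<And>\<sigma>. \<sigma> \<in> SigmaA a b \<alpha> v \<zeta> \<xi> V1 V2 \<Longrightarrow> 4 * \<delta> \<le> p * real (card (Yset V1 V2 \<sigma> t l))"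
  shows "measure_pmf.prob (sbm a b lam n V1 V2)
            {G. \<bar>maxstat a b \<alpha> v \<zeta> \<xi> lam \<gamma> \<delta> n V1 V2 k l s t G\<bar> > \<epsilon>}
         \<le> 2 ^ (V1 + V2) * 4 ^ (V1 + V2) * exp (- (\<epsilon> * real n / \<gamma> * \<delta> / 4))"
proof -
  define N where "N = V1 + V2"
  define \<Sigma> where "\<Sigma> = SigmaA a b \<alpha> v \<zeta> \<xi> V1 V2"
  have \<Sigma>sub: "\<Sigma> \<subseteq> configs N" by (auto simp: \<Sigma>_def SigmaA_def N_def)
  have fin\<Sigma>: "finite \<Sigma>" using \<Sigma>sub configs_card[of N] finite_subset by blast
  have card\<Sigma>: "card \<Sigma> \<le> 2 ^ N" using \<Sigma>sub configs_card[of N] card_mono le_trans by blast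
  define x where "x = \<epsilon> * real n / \<gamma>"
  have x0: "0 \<le> x" using pos by (simp add: x_def)
  define m where "m = nat \<lfloor>x\<rfloor> + 1"
  have mx: "x \<le> real m" unfolding m_def using x0 by linarith
  have mC: "m \<le> C" if "x < real C" for C :: nat
  proof -
    have "\<lfloor>x\<rfloor> < int C" using that by linarith
    then show ?thesis unfolding m_def using x0 by linarith
  qed
  define \<mu> where "\<mu> = (\<lambda>\<sigma>. p * real (card (Yset V1 V2 \<sigma> t l)))"
  define E where "E = (\<lambda>\<sigma>. {G. m \<le> card {u \<in> Yset V1 V2 \<sigma> s k.
          \<bar>real (card {w \<in> Yset V1 V2 \<sigma> t l. adj G u w}) - \<mu> \<sigma>\<bar> \<ge> sqrt (\<mu> \<sigma> * \<delta>)}})"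
  define f where "f = (\<lambda>G \<sigma>. \<gamma> / real n *
        real (card {u \<in> Yset V1 V2 \<sigma> s k. Bevent a b lam n V1 V2 \<delta> G \<sigma> k l t u}))"
  have Bev: "{u \<in> Yset V1 V2 \<sigma> s k. Bevent a b lam n V1 V2 \<delta> G \<sigma> k l t u}
     = {u \<in> Yset V1 V2 \<sigma> s k. \<bar>real (card {w \<in> Yset V1 V2 \<sigma> t l. adj G u w}) - \<mu> \<sigma>\<bar> \<ge> sqrt (\<mu> \<sigma> * \<delta>)}"
    for G \<sigma> by (simp add: Bevent_def Yhat_def \<mu>_def p_def)
  have sub: "{G. \<bar>maxstat a b \<alpha> v \<zeta> \<xi> lam \<gamma> \<delta> n V1 V2 k l s t G\<bar> > \<epsilon>} \<subseteq> (\<Union>\<sigma>\<in>\<Sigma>. E \<sigma>)"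
  proof
    fix G assume "G \<in> {G. \<bar>maxstat a b \<alpha> v \<zeta> \<xi> lam \<gamma> \<delta> n V1 V2 k l s t G\<bar> > \<epsilon>}"
    then have gt: "\<bar>Max (insert 0 (f G ` \<Sigma>))\<bar> > \<epsilon>"
      by (simp add: maxstat_def f_def \<Sigma>_def)
    have finI: "finite (insert 0 (f G ` \<Sigma>))" using fin\<Sigma> by simp
    have "0 \<le> Max (insert 0 (f G ` \<Sigma>))" using finI by (intro Max_ge) auto
    then have gt': "Max (insert 0 (f G ` \<Sigma>)) > \<epsilon>" using gt by simp
    have "Max (insert 0 (f G ` \<Sigma>)) \<in> insert 0 (f G ` \<Sigma>)" using finI by (intro Max_in) auto
    then obtain \<sigma> where \<sigma>: "\<sigma> \<in> \<Sigma>" "f G \<sigma> > \<epsilon>" using gt' pos by auto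
    have "x < real (card {u \<in> Yset V1 V2 \<sigma> s k. Bevent a b lam n V1 V2 \<delta> G \<sigma> k l t u})"
      using \<sigma>(2) pos unfolding f_def x_def by (simp add: field_simps)
    then have "m \<le> card {u \<in> Yset V1 V2 \<sigma> s k. Bevent a b lam n V1 V2 \<delta> G \<sigma> k l t u}" by (rule mC)
    then have "G \<in> E \<sigma>" unfolding E_def Bev by simp
    then show "G \<in> (\<Union>\<sigma>\<in>\<Sigma>. E \<sigma>)" using \<sigma>(1) by blast
  qed
  have Ebound: "measure_pmf.prob (sbm a b lam n V1 V2) (E \<sigma>) \<le> 4 ^ N * exp (- (real m * \<delta> / 4))"
    if "\<sigma> \<in> \<Sigma>" for \<sigma>
  proof -
    have U1: "Yset V1 V2 \<sigma> s k \<subseteq> community V1 V2 k" "Yset V1 V2 \<sigma> t l \<subseteq> community V1 V2 l"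
      by (auto simp: Yset_def)
    have disj: "Yset V1 V2 \<sigma> s k \<inter> Yset V1 V2 \<sigma> t l = {}"
      using kl ne by (auto simp: Yset_def community_def split: if_splits)
    have "measure_pmf.prob (sbm a b lam n V1 V2) (E \<sigma>) \<le> 4 ^ card (Yset V1 V2 \<sigma> s k) * exp (- (real m * \<delta> / 4))"
      unfolding E_def
      by (rule count_tail[OF kl U1 disj p[unfolded p_def] \<mu>_def[THEN fun_cong, unfolded p_def] pos(1)])
         (use H[of \<sigma>] that in \<open>simp add: \<Sigma>_def \<mu>_def\<close>)
    also have "\<dots> \<le> 4 ^ N * exp (- (real m * \<delta> / 4))"
    proof -
      have "Yset V1 V2 \<sigma> s k \<subseteq> {..<N}" using kl by (auto simp: Yset_def community_def N_def)
      then have "card (Yset V1 V2 \<sigma> s k) \<le> N" using card_mono[of "{..<N}"] by fastforce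
      then have "(4::real) ^ card (Yset V1 V2 \<sigma> s k) \<le> 4 ^ N" by (intro power_increasing) auto
      then show ?thesis by (intro mult_right_mono) auto
    qed
    finally show ?thesis .
  qed
  have "measure_pmf.prob (sbm a b lam n V1 V2)
            {G. \<bar>maxstat a b \<alpha> v \<zeta> \<xi> lam \<gamma> \<delta> n V1 V2 k l s t G\<bar> > \<epsilon>}
        \<le> measure_pmf.prob (sbm a b lam n V1 V2) (\<Union>\<sigma>\<in>\<Sigma>. E \<sigma>)"
    by (rule measure_pmf.finite_measure_mono[OF sub]) simp
  also have "\<dots> \<le> (\<Sum>\<sigma>\<in>\<Sigma>. measure_pmf.prob (sbm a b lam n V1 V2) (E \<sigma>))"
    by (rule measure_UNION_le[OF fin\<Sigma>]) simp
  also have "\<dots> \<le> (\<Sum>\<sigma>\<in>\<Sigma>. 4 ^ N * exp (- (real m * \<delta> / 4)))"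
    by (intro sum_mono Ebound)
  also have "\<dots> = real (card \<Sigma>) * (4 ^ N * exp (- (real m * \<delta> / 4)))" by simp
  also have "\<dots> \<le> 2 ^ N * (4 ^ N * exp (- (real m * \<delta> / 4)))"
    using card\<Sigma> by (intro mult_right_mono) (auto simp flip: of_nat_power)
  also have "\<dots> \<le> 2 ^ N * (4 ^ N * exp (- (x * \<delta> / 4)))"
    using mx pos by (intro mult_left_mono) (auto simp: mult_right_mono)
  finally show ?thesis by (simp add: N_def x_def)
qed



lemma card_community: "l \<in> {1,2} \<Longrightarrow> card (community V1 V2 l) = (if l = 1 then V1 else V2)"
  by (auto simp: community_def)

lemma yset_card:
  fixes \<xi> :: real
  assumes \<sigma>: "\<sigma> \<in> configs (V1 + V2)" and l: "l \<in> {1,2}" and t: "t \<in> {-1,1}"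
    and z: "-1 + \<xi> \<le> magn V1 V2 \<sigma> l" "magn V1 V2 \<sigma> l \<le> 1 - \<xi>"
    and C: "card (community V1 V2 l) > 0"
  shows "real (card (Yset V1 V2 \<sigma> t l)) \<ge> \<xi> * real (card (community V1 V2 l)) / 2"
proof -
  define Cm where "Cm = community V1 V2 l"
  define P where "P = Yset V1 V2 \<sigma> 1 l"
  define Q where "Q = Yset V1 V2 \<sigma> (-1) l"
  have finC: "finite Cm" using C Cm_def card_gt_0_iff by blast
  have CN: "Cm \<subseteq> {..<V1+V2}" using l by (auto simp: Cm_def community_def)
  have vals: "\<sigma> u \<in> {-1,1}" if "u \<in> Cm" for u using \<sigma> CN that by (auto simp: configs_def)
  have PQ: "Cm = P \<union> Q" "P \<inter> Q = {}" using vals by (auto simp: P_def Q_def Yset_def Cm_def)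
  have fin: "finite P" "finite Q" using finC PQ(1) by auto
  have cardC: "real (card Cm) = real (card P) + real (card Q)"
    using card_Un_disjoint[OF fin PQ(2)] PQ(1) by simp
  have sumC: "(\<Sum>u\<in>Cm. real_of_int (\<sigma> u)) = real (card P) - real (card Q)"
  proof -
    have "(\<Sum>u\<in>Cm. real_of_int (\<sigma> u)) = (\<Sum>u\<in>P. real_of_int (\<sigma> u)) + (\<Sum>u\<in>Q. real_of_int (\<sigma> u))"
      unfolding PQ(1) by (rule sum.union_disjoint[OF fin PQ(2)])
    also have "(\<Sum>u\<in>P. real_of_int (\<sigma> u)) = (\<Sum>u\<in>P. 1)" by (intro sum.cong) (auto simp: P_def Yset_def)
    also have "(\<Sum>u\<in>Q. real_of_int (\<sigma> u)) = (\<Sum>u\<in>Q. -1)" by (intro sum.cong) (auto simp: Q_def Yset_def)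
    finally show ?thesis by simp
  qed
  have Cpos: "real (card Cm) > 0" using C Cm_def by simp
  have mg: "magn V1 V2 \<sigma> l * real (card Cm) = real (card P) - real (card Q)"
    using Cpos sumC by (simp add: magn_def Cm_def)
  have z1: "(-1 + \<xi>) * real (card Cm) \<le> real (card P) - real (card Q)"
    using z(1) Cpos mg by (metis mult_right_mono less_imp_le)
  have z2: "real (card P) - real (card Q) \<le> (1 - \<xi>) * real (card Cm)"
    using z(2) Cpos mg by (metis mult_right_mono less_imp_le)
  have "t = 1 \<or> t = -1" using t by auto
  then show ?thesis
  proof
    assume "t = 1"
    then show ?thesis using z1 cardC by (simp add: P_def[symmetric] Cm_def[symmetric] algebra_simps)
  next
    assume "t = -1"
    then show ?thesis using z2 cardC by (simp add: Q_def[symmetric] Cm_def[symmetric] algebra_simps)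
  qed
qed



theorem lemmaB3:
  fixes V1 V2 :: "nat \<Rightarrow> nat" and v :: "nat \<Rightarrow> real"
    and a b \<alpha> \<zeta> :: real and lam \<gamma> \<delta> \<xi> :: "nat \<Rightarrow> real"
    and k l :: nat and s t :: int
  assumes v_pos: "v 1 > 0" "v 2 > 0"
    and V1_lim: "(\<lambda>n. real (V1 n) / real n) \<longlonglongrightarrow> v 1"
    and V2_lim: "(\<lambda>n. real (V2 n) / real n) \<longlonglongrightarrow> v 2"
    and ab: "a > b" "b > 0"
    and lam_lim: "filterlim lam at_top sequentially"
    and p_le_1: "eventually (\<lambda>n. a * lam n \<le> real n) sequentially"
    and \<gamma>_pos: "\<And>n. \<gamma> n > 0" and \<delta>_pos: "\<And>n. \<delta> n > 0"
    and \<xi>_range: "\<And>n. 0 < \<xi> n \<and> \<xi> n < 1"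
    and \<delta>_lim: "filterlim \<delta> at_top sequentially"
    and \<delta>\<xi>lam: "(\<lambda>n. \<delta> n / (\<xi> n * lam n)) \<longlonglongrightarrow> 0"
    and \<delta>\<gamma>: "filterlim (\<lambda>n. \<delta> n / \<gamma> n) at_top sequentially"
    and \<zeta>_pos: "\<zeta> > 0"
    and kl: "k \<in> {1, 2}" "l \<in> {1, 2}"
    and st: "s \<in> {-1, 1}" "t \<in> {-1, 1}"
    and ne: "(k, s) \<noteq> (l, t)"
  shows "\<forall>\<epsilon>>0. (\<lambda>n. measure_pmf.prob (sbm a b (lam n) n (V1 n) (V2 n))
            {G. \<bar>maxstat a b \<alpha> v \<zeta> (\<xi> n) (lam n) (\<gamma> n) (\<delta> n) n (V1 n) (V2 n) k l s t G\<bar> > \<epsilon>})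
          \<longlonglongrightarrow> 0"
proof (intro allI impI)
  fix \<epsilon> :: real assume \<epsilon>: "\<epsilon> > 0"
  define P where "P = (\<lambda>n. measure_pmf.prob (sbm a b (lam n) n (V1 n) (V2 n))
            {G. \<bar>maxstat a b \<alpha> v \<zeta> (\<xi> n) (lam n) (\<gamma> n) (\<delta> n) n (V1 n) (V2 n) k l s t G\<bar> > \<epsilon>})"
  define Cc where "Cc = v 1 + v 2 + 1"
  define Y where "Y = (\<lambda>n. Cc * ln 8 - \<epsilon> / 4 * (\<delta> n / \<gamma> n))"
  have Ylim: "filterlim Y at_bot sequentially"
    unfolding filterlim_at_bot
  proof
    fix Z :: real
    have "eventually (\<lambda>n. (Cc * ln 8 - Z) * 4 / \<epsilon> \<le> \<delta> n / \<gamma> n) sequentially"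
      using \<delta>\<gamma> unfolding filterlim_at_top by blast
    then show "eventually (\<lambda>n. Y n \<le> Z) sequentially"
    proof (rule eventually_mono)
      fix n assume "(Cc * ln 8 - Z) * 4 / \<epsilon> \<le> \<delta> n / \<gamma> n"
      then have "Cc * ln 8 - Z \<le> \<epsilon> / 4 * (\<delta> n / \<gamma> n)" using \<epsilon> by (simp add: field_simps)
      then show "Y n \<le> Z" by (simp add: Y_def)
    qed
  qed
  have expY: "(\<lambda>n. exp (Y n)) \<longlonglongrightarrow> 0"
    by (rule filterlim_compose[OF exp_at_bot Ylim])
  define vl where "vl = v l"
  have vl: "vl > 0" using kl v_pos by (auto simp: vl_def)
  have Vl_lim: "(\<lambda>n. real (if l = 1 then V1 n else V2 n) / real n) \<longlonglongrightarrow> vl"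
    using kl V1_lim V2_lim by (auto simp: vl_def)
  have sum_lim: "(\<lambda>n. real (V1 n + V2 n) / real n) \<longlonglongrightarrow> v 1 + v 2"
    using tendsto_add[OF V1_lim V2_lim] by (simp add: add_divide_distrib)
  have ev1: "eventually (\<lambda>n. 1 \<le> lam n) sequentially" using lam_lim unfolding filterlim_at_top by blast
  have ev2: "eventually (\<lambda>n. vl / 2 < real (if l = 1 then V1 n else V2 n) / real n) sequentially"
    using order_tendstoD(1)[OF Vl_lim, of "vl / 2"] vl by linarith
  have ev3: "eventually (\<lambda>n. real (V1 n + V2 n) / real n < Cc) sequentially"
    using order_tendstoD(2)[OF sum_lim] by (simp add: Cc_def)
  have ev4: "eventually (\<lambda>n. \<delta> n / (\<xi> n * lam n) < b * vl / 16) sequentially"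
    using order_tendstoD(2)[OF \<delta>\<xi>lam, of "b * vl / 16"] vl ab by simp
  have ev5: "eventually (\<lambda>n. Y n \<le> 0) sequentially" using Ylim unfolding filterlim_at_bot by blast
  have ev6: "eventually (\<lambda>n. 0 < n) sequentially" by (rule eventually_gt_at_top)
  have eb: "eventually (\<lambda>n. P n \<le> exp (Y n)) sequentially"
    using ev1 ev2 ev3 ev4 ev5 ev6 p_le_1
  proof eventually_elim
    case (elim n)
    note e = elim
    define p where "p = sbm_p a b (lam n) n k l"
    define Vl where "Vl = (if l = 1 then V1 n else V2 n)"
    have nr: "real n > 0" using e by simp
    have lpos: "lam n > 0" using e by simp
    have p_lo: "b * lam n / real n \<le> p" using ab lpos nr
      by (auto simp: p_def sbm_p_def divide_right_mono)
    have p_hi: "p \<le> a * lam n / real n" using ab lpos nr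
      by (auto simp: p_def sbm_p_def divide_right_mono)
    have p01: "0 \<le> p" "p \<le> 1"
    proof -
      show "0 \<le> p" using p_lo ab lpos nr by (smt (verit) divide_nonneg_pos mult_pos_pos)
      have "a * lam n / real n \<le> 1" using e nr by (simp add: divide_le_eq)
      then show "p \<le> 1" using p_hi by linarith
    qed
    have VlC: "card (community (V1 n) (V2 n) l) = Vl" using card_community[OF kl(2)] by (simp add: Vl_def)
    have Vlbig: "real Vl > vl / 2 * real n" using e nr by (simp add: Vl_def field_simps)
    have H: "4 * \<delta> n \<le> p * real (card (Yset (V1 n) (V2 n) \<sigma> t l))"
      if \<sigma>: "\<sigma> \<in> SigmaA a b \<alpha> v \<zeta> (\<xi> n) (V1 n) (V2 n)" for \<sigma>
    proof -
      have \<sigma>c: "\<sigma> \<in> configs (V1 n + V2 n)" and iA: "inA a b \<alpha> v \<zeta> (\<xi> n) (\<lambda>k. magn (V1 n) (V2 n) \<sigma> k)"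
        using \<sigma> by (auto simp: SigmaA_def)
      have z: "-1 + \<xi> n \<le> magn (V1 n) (V2 n) \<sigma> l" "magn (V1 n) (V2 n) \<sigma> l \<le> 1 - \<xi> n"
        using iA kl(2) unfolding inA_def by auto
      have Vpos: "card (community (V1 n) (V2 n) l) > 0"
        using Vlbig vl nr VlC by (metis of_nat_0 gr0I mult_pos_pos half_gt_zero not_less_iff_gr_or_eq)
      have Y1: "real (card (Yset (V1 n) (V2 n) \<sigma> t l)) \<ge> \<xi> n * real Vl / 2"
        using yset_card[OF \<sigma>c kl(2) st(2) z Vpos] VlC by simp
      have xl: "\<xi> n * lam n > 0" using \<xi>_range[of n] lpos by simp
      have d1: "\<delta> n < b * vl / 16 * (\<xi> n * lam n)" using e xl by (simp add: divide_less_eq)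
      have "4 * \<delta> n \<le> b * vl / 4 * (\<xi> n * lam n)" using d1 by simp
      also have "\<dots> = (b * lam n / real n) * (\<xi> n * (vl / 2 * real n) / 2)" using nr by (simp add: field_simps)
      also have "\<dots> \<le> (b * lam n / real n) * (\<xi> n * real Vl / 2)"
        using Vlbig \<xi>_range[of n] ab lpos nr by (intro mult_left_mono divide_right_mono) auto
      also have "\<dots> \<le> p * real (card (Yset (V1 n) (V2 n) \<sigma> t l))"
        using p_lo Y1 \<xi>_range[of n] ab lpos nr p01
        by (intro mult_mono) auto
      finally show ?thesis .
    qed
    have "P n \<le> 2 ^ (V1 n + V2 n) * 4 ^ (V1 n + V2 n) * exp (- (\<epsilon> * real n / \<gamma> n * \<delta> n / 4))"
      unfolding P_def
      by (rule prob_bound_n[OF kl st ne p01[unfolded p_def] \<delta>_pos \<gamma>_pos \<epsilon> _ H[unfolded p_def]])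
         (use e in auto)
    also have "(2::real) ^ (V1 n + V2 n) * 4 ^ (V1 n + V2 n) = exp (real (V1 n + V2 n) * ln 8)"
    proof -
      have "(2::real) ^ (V1 n + V2 n) * 4 ^ (V1 n + V2 n) = 8 ^ (V1 n + V2 n)"
        by (simp flip: power_mult_distrib)
      also have "\<dots> = exp (ln 8) ^ (V1 n + V2 n)" by simp
      also have "\<dots> = exp (real (V1 n + V2 n) * ln 8)"
        by (rule exp_of_nat_mult[symmetric])
      finally show ?thesis .
    qed
    also have "exp (real (V1 n + V2 n) * ln 8) * exp (- (\<epsilon> * real n / \<gamma> n * \<delta> n / 4))
        \<le> exp (real n * Cc * ln 8) * exp (- (\<epsilon> * real n / \<gamma> n * \<delta> n / 4))"
    proof -
      have "real (V1 n + V2 n) < Cc * real n" using e nr by (simp add: divide_less_eq)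
      then have "real (V1 n + V2 n) \<le> real n * Cc" by (simp add: mult.commute)
      then have "real (V1 n + V2 n) * ln 8 \<le> real n * Cc * ln 8" by (intro mult_right_mono) auto
      then show ?thesis by (intro mult_right_mono) auto
    qed
    also have "\<dots> = exp (real n * Y n)"
    proof -
      have "real n * Cc * ln 8 + - (\<epsilon> * real n / \<gamma> n * \<delta> n / 4) = real n * Y n"
        using \<gamma>_pos[of n] by (simp add: Y_def field_simps)
      then show ?thesis by (simp flip: exp_add)
    qed
    also have "\<dots> \<le> exp (Y n)"
    proof -
      have "real n \<ge> 1" using e by simp
      then have "real n * Y n \<le> 1 * Y n" using e by (intro mult_right_mono_neg) auto
      then show ?thesis by simp
    qed
    finally show ?case .
  qed
  have e0: "eventually (\<lambda>n. 0 \<le> P n) sequentially" by (simp add: P_def)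
  show "P \<longlonglongrightarrow> 0" by (rule tendsto_sandwich[OF e0 eb tendsto_const expY])
qed

end
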